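(* Let $\mathcal{H}$ be a complex separable Hilbert space, let $\mathcal{A}=(A_n)_{n\ge 0}$ be a sequence of positive invertible bounded operators on $\mathcal{H}$ with $\sup_n\|A_n\|<\infty$, and let $W_{\mathcal A}$ be the associated operator-valued weighted shift on $\ell^2(\mathcal H)$. Let $k\ge 1$ be an integer. Then $W_{\mathcal A}$ is $k$-hyponormal if and only if $W_{\mathcal A}$ is $k_E$-hyponormal.
   Context: $\ell^2(\mathcal H)=\{(x_n)_{n\ge0}: x_n\in\mathcal H,\ \sum_n\|x_n\|^2<\infty\}$ with inner product $\langle x,y\rangle=\sum_n\langle x_n,y_n\rangle$. The operator-valued weighted shift is $W_{\mathcal A}(x_0,x_1,x_2,\dots)=(0,A_0x_0,A_1x_1,\dots)$. A bounded operator $T$ is $k$-hyponormal if the operator matrix $(T^{*j}T^{i})_{0\le i,j\le k}$ is positive (equivalently $([T^{*j},T^i])_{1\le i,j\le k}\ge0$, where $[X,Y]=XY-YX$), and $k_E$-hyponormal (Embry $k$-hyponormal) if the operator matrix $(T^{*(i+j)}T^{i+j})_{0\le i,j\le k}$ is positive. *)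

theory Defs
  imports "HOL-Analysis.Analysis"
begin

text \<open>The inner product is linear in
the first argument and conjugate-linear in the second.\<close>

class cvector_space = real_vector +
  fixes scaleC :: "complex \<Rightarrow> 'a \<Rightarrow> 'a"
  assumes scaleC_add_right: "scaleC a (x + y) = scaleC a x + scaleC a y"
    and scaleC_add_left: "scaleC (a + b) x = scaleC a x + scaleC b x"
    and scaleC_scaleC: "scaleC a (scaleC b x) = scaleC (a * b) x"
    and scaleC_one: "scaleC 1 x = x"
    and scaleR_scaleC: "scaleR r x = scaleC (complex_of_real r) x"

class cinner_space = cvector_space + real_normed_vector +
  fixes cinner :: "'a \<Rightarrow> 'a \<Rightarrow> complex"
  assumes cinner_commute: "cinner x y = cnj (cinner y x)"
    and cinner_add_left: "cinner (x + y) z = cinner x z + cinner y z"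
    and cinner_scaleC_left: "cinner (scaleC c x) y = c * cinner x y"
    and cinner_ge_zero: "0 \<le> Re (cinner x x)"
    and cinner_eq_zero_iff: "cinner x x = 0 \<longleftrightarrow> x = 0"
    and norm_eq_sqrt_cinner: "norm x = sqrt (Re (cinner x x))"

class chilbert_space = cinner_space + complete_space

definition bounded_cop :: "('a::cinner_space \<Rightarrow> 'a) \<Rightarrow> bool" where
  "bounded_cop T \<longleftrightarrow> (\<forall>x y. T (x + y) = T x + T y) \<and> (\<forall>c x. T (scaleC c x) = scaleC c (T x))
     \<and> (\<exists>K. \<forall>x. norm (T x) \<le> norm x * K)"

definition cpos :: "complex \<Rightarrow> bool" where
  "cpos z \<longleftrightarrow> Im z = 0 \<and> 0 \<le> Re z"

definition positive_op :: "('a::cinner_space \<Rightarrow> 'a) \<Rightarrow> bool" where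
  "positive_op T \<longleftrightarrow> (\<forall>x. cpos (cinner (T x) x))"

definition invertible_op :: "('a::cinner_space \<Rightarrow> 'a) \<Rightarrow> bool" where
  "invertible_op T \<longleftrightarrow> (\<exists>S. bounded_cop S \<and> (\<forall>x. S (T x) = x) \<and> (\<forall>x. T (S x) = x))"

definition l2seq :: "(nat \<Rightarrow> 'a::cinner_space) set" where
  "l2seq = {x. summable (\<lambda>n. (norm (x n))^2)}"

definition l2inner :: "(nat \<Rightarrow> 'a::cinner_space) \<Rightarrow> (nat \<Rightarrow> 'a) \<Rightarrow> complex" where
  "l2inner x y = (\<Sum>n. cinner (x n) (y n))"

definition l2adjoint :: "((nat \<Rightarrow> 'a::cinner_space) \<Rightarrow> (nat \<Rightarrow> 'a)) \<Rightarrow> (nat \<Rightarrow> 'a) \<Rightarrow> (nat \<Rightarrow> 'a)" where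
  "l2adjoint T = (SOME S. (\<forall>y\<in>l2seq. S y \<in> l2seq) \<and>
       (\<forall>x\<in>l2seq. \<forall>y\<in>l2seq. l2inner (T x) y = l2inner x (S y)))"

definition wshift :: "(nat \<Rightarrow> 'a::cinner_space \<Rightarrow> 'a) \<Rightarrow> (nat \<Rightarrow> 'a) \<Rightarrow> (nat \<Rightarrow> 'a)" where
  "wshift A x = (\<lambda>n. if n = 0 then 0 else A (n - 1) (x (n - 1)))"

text \<open>Positivity of a (k+1)x(k+1) operator matrix (M i j), i,j = 0..k, acting on the
direct sum of k+1 copies of l^2(H): the (i,j) entry is row i, column j, so
<M x, x> = sum_{i,j} <M i j (x j), x i>.\<close>

definition op_matrix_pos :: "nat \<Rightarrow> (nat \<Rightarrow> nat \<Rightarrow> (nat \<Rightarrow> 'a::cinner_space) \<Rightarrow> (nat \<Rightarrow> 'a)) \<Rightarrow> bool" where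
  "op_matrix_pos k M \<longleftrightarrow> (\<forall>x. (\<forall>i\<le>k. x i \<in> l2seq) \<longrightarrow>
      cpos (\<Sum>i\<le>k. \<Sum>j\<le>k. l2inner (M i j (x j)) (x i)))"

definition k_hyponormal :: "nat \<Rightarrow> ((nat \<Rightarrow> 'a::cinner_space) \<Rightarrow> (nat \<Rightarrow> 'a)) \<Rightarrow> bool" where
  "k_hyponormal k T \<longleftrightarrow> op_matrix_pos k (\<lambda>i j. (l2adjoint T ^^ j) \<circ> (T ^^ i))"

definition embry_k_hyponormal :: "nat \<Rightarrow> ((nat \<Rightarrow> 'a::cinner_space) \<Rightarrow> (nat \<Rightarrow> 'a)) \<Rightarrow> bool" where
  "embry_k_hyponormal k T \<longleftrightarrow> op_matrix_pos k (\<lambda>i j. (l2adjoint T ^^ (i + j)) \<circ> (T ^^ (i + j)))"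

end

theory Submission
  imports Defs
begin

lemma scaleC_zero_left[simp]: "scaleC 0 (x::'a::cvector_space) = 0"
  by (metis scaleR_scaleC scaleR_zero_left of_real_0)
lemma scaleC_minus1: "scaleC (-1) (x::'a::cvector_space) = - x"
  by (metis scaleR_scaleC scaleR_minus1_left of_real_1 of_real_minus)

lemma cinner_zero_left[simp]: "cinner 0 (y::'a::cinner_space) = 0"
  by (metis cinner_scaleC_left mult_zero_left scaleC_zero_left)
lemma cinner_zero_right[simp]: "cinner (y::'a::cinner_space) 0 = 0"
  by (metis cinner_commute cinner_zero_left complex_cnj_zero)
lemma cinner_add_right: "cinner (x::'a::cinner_space) (y + z) = cinner x y + cinner x z"
  by (metis cinner_commute cinner_add_left complex_cnj_add)
lemma cinner_scaleC_right: "cinner (x::'a::cinner_space) (scaleC c y) = cnj c * cinner x y"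
  by (metis cinner_commute cinner_scaleC_left complex_cnj_mult)
lemma cinner_minus_left: "cinner (- x::'a::cinner_space) y = - cinner x y"
  by (metis cinner_scaleC_left scaleC_minus1 mult_minus1)
lemma cinner_minus_right: "cinner (x::'a::cinner_space) (- y) = - cinner x y"
  by (metis cinner_commute cinner_minus_left complex_cnj_minus)
lemma cinner_diff_left: "cinner (x - y::'a::cinner_space) z = cinner x z - cinner y z"
  by (metis cinner_add_left cinner_minus_left diff_conv_add_uminus)
lemma cinner_diff_right: "cinner (x::'a::cinner_space) (y - z) = cinner x y - cinner x z"
  by (metis cinner_add_right cinner_minus_right diff_conv_add_uminus)

lemma norm_sq_cinner: "(norm (x::'a::cinner_space))^2 = Re (cinner x x)"
  by (simp add: norm_eq_sqrt_cinner cinner_ge_zero)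

lemma Re_cinner_bound: "\<bar>Re (cinner (x::'a::cinner_space) y)\<bar> \<le> (norm x)^2 + (norm y)^2"
proof -
  have s: "Re (cinner y x) = Re (cinner x y)" by (subst cinner_commute) simp
  have a: "0 \<le> Re (cinner (x - y) (x - y))" by (rule cinner_ge_zero)
  have b: "0 \<le> Re (cinner (x + y) (x + y))" by (rule cinner_ge_zero)
  from a have "0 \<le> Re (cinner x x) - 2 * Re (cinner x y) + Re (cinner y y)"
    by (simp add: cinner_diff_left cinner_diff_right s)
  moreover from b have "0 \<le> Re (cinner x x) + 2 * Re (cinner x y) + Re (cinner y y)"
    by (simp add: cinner_add_left cinner_add_right s)
  ultimately show ?thesis by (simp add: norm_sq_cinner abs_le_iff)
qed

lemma norm_scaleC_i: "norm (scaleC \<i> (x::'a::cinner_space)) = norm x"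
  by (simp add: norm_eq_sqrt_cinner cinner_scaleC_left cinner_scaleC_right)

lemma norm_cinner_bound: "norm (cinner (x::'a::cinner_space) y) \<le> 2 * ((norm x)^2 + (norm y)^2)"
proof -
  have 1: "\<bar>Re (cinner x y)\<bar> \<le> (norm x)^2 + (norm y)^2" by (rule Re_cinner_bound)
  have "\<bar>Re (cinner (scaleC \<i> x) y)\<bar> \<le> (norm x)^2 + (norm y)^2"
    using Re_cinner_bound[of "scaleC \<i> x" y] by (simp add: norm_scaleC_i)
  then have 2: "\<bar>Im (cinner x y)\<bar> \<le> (norm x)^2 + (norm y)^2" by (simp add: cinner_scaleC_left)
  have "norm (cinner x y) \<le> \<bar>Re (cinner x y)\<bar> + \<bar>Im (cinner x y)\<bar>" by (rule cmod_le)
  moreover have "0 \<le> (norm x)^2 + (norm y)^2" by simp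
  ultimately show ?thesis using 1 2 by (smt (verit))
qed

definition delta :: "nat \<Rightarrow> 'a::zero \<Rightarrow> nat \<Rightarrow> 'a" where
  "delta q v = (\<lambda>p. if p = q then v else 0)"

primrec Cop :: "(nat \<Rightarrow> 'a \<Rightarrow> 'a) \<Rightarrow> nat \<Rightarrow> nat \<Rightarrow> 'a \<Rightarrow> 'a" where
  "Cop A a 0 = (\<lambda>x. x)"
| "Cop A a (Suc m) = (\<lambda>x. A (a + m) (Cop A a m x))"

lemma l2_zero[simp]: "(\<lambda>n. 0) \<in> l2seq"
  by (simp add: l2seq_def)

lemma l2_add:
  assumes "a \<in> l2seq" "b \<in> l2seq"
  shows "(\<lambda>n. a n + b n) \<in> l2seq"
proof -
  have sa: "summable (\<lambda>n. (norm (a n))^2)" and sb: "summable (\<lambda>n. (norm (b n))^2)"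
    using assms by (auto simp: l2seq_def)
  have "summable (\<lambda>n. 2 * (norm (a n))^2 + 2 * (norm (b n))^2)"
    using sa sb by (intro summable_add summable_mult) auto
  moreover have "norm ((norm (a n + b n))^2) \<le> 2 * (norm (a n))^2 + 2 * (norm (b n))^2" for n
  proof -
    have t: "norm (a n + b n) \<le> norm (a n) + norm (b n)" by (rule norm_triangle_ineq)
    have "(norm (a n + b n))^2 \<le> (norm (a n) + norm (b n))^2"
      using t by (intro power_mono) auto
    also have "\<dots> \<le> 2 * (norm (a n))^2 + 2 * (norm (b n))^2"
    proof -
      have h: "0 \<le> (norm (a n) - norm (b n))^2" by simp
      show ?thesis using h unfolding power2_diff power2_sum by linarith
    qed
    finally show ?thesis by simp
  qed
  ultimately show ?thesis unfolding l2seq_def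
    by (auto intro: summable_comparison_test')
qed

lemma l2_le:
  assumes "a \<in> l2seq" "\<And>n. norm (b n) \<le> norm (a n)"
  shows "b \<in> l2seq"
proof -
  have "summable (\<lambda>n. (norm (a n))^2)" using assms by (auto simp: l2seq_def)
  moreover have "norm ((norm (b n))^2) \<le> (norm (a n))^2" for n
    using assms(2)[of n] by (simp add: power_mono)
  ultimately show ?thesis unfolding l2seq_def by (auto intro: summable_comparison_test')
qed

lemma l2_delta[simp]: "delta q v \<in> l2seq"
proof -
  have "summable (\<lambda>n. if n = q then (norm v)^2 else 0)" by simp
  moreover have "(\<lambda>n. (norm (delta q v n))^2) = (\<lambda>n. if n = q then (norm v)^2 else 0)"
    by (auto simp: delta_def)
  ultimately show ?thesis by (simp add: l2seq_def)
qed

lemma summable_cinner: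
  assumes "a \<in> l2seq" "b \<in> l2seq"
  shows "summable (\<lambda>n. cinner (a n) (b n))"
proof -
  have "summable (\<lambda>n. 2 * ((norm (a n))^2 + (norm (b n))^2))"
    using assms by (intro summable_mult summable_add) (auto simp: l2seq_def)
  then show ?thesis
    by (rule summable_comparison_test') (rule norm_cinner_bound)
qed

lemma l2inner_add_left:
  assumes "a \<in> l2seq" "b \<in> l2seq" "c \<in> l2seq"
  shows "l2inner (\<lambda>n. a n + b n) c = l2inner a c + l2inner b c"
  unfolding l2inner_def using summable_cinner[OF assms(1,3)] summable_cinner[OF assms(2,3)]
  by (simp add: cinner_add_left suminf_add)

lemma l2inner_add_right:
  assumes "a \<in> l2seq" "b \<in> l2seq" "c \<in> l2seq"
  shows "l2inner c (\<lambda>n. a n + b n) = l2inner c a + l2inner c b"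
  unfolding l2inner_def using summable_cinner[OF assms(3,1)] summable_cinner[OF assms(3,2)]
  by (simp add: cinner_add_right suminf_add)

lemma l2inner_zero_left[simp]: "l2inner (\<lambda>n. 0) c = 0"
  by (simp add: l2inner_def)
lemma l2inner_zero_right[simp]: "l2inner c (\<lambda>n. 0) = 0"
  by (simp add: l2inner_def)

lemma l2inner_cnj:
  assumes "a \<in> l2seq" "b \<in> l2seq"
  shows "l2inner a b = cnj (l2inner b a)"
proof -
  have "(\<lambda>n. cinner (b n) (a n)) sums l2inner b a"
    unfolding l2inner_def using summable_cinner[OF assms(2,1)] by (rule summable_sums)
  then have "(\<lambda>n. cnj (cinner (b n) (a n))) sums cnj (l2inner b a)"
    by (simp add: sums_cnj)
  moreover have "(\<lambda>n. cinner (a n) (b n)) = (\<lambda>n. cnj (cinner (b n) (a n)))"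
    by (rule ext) (rule cinner_commute)
  ultimately have "(\<lambda>n. cinner (a n) (b n)) sums cnj (l2inner b a)" by simp
  then show ?thesis unfolding l2inner_def by (rule sums_unique[symmetric])
qed

lemma l2inner_delta_left: "l2inner (delta q v) b = cinner v (b q)"
  unfolding l2inner_def by (subst suminf_finite[of "{q}"]) (auto simp: delta_def)

lemma l2inner_delta_right: "l2inner a (delta q v) = cinner (a q) v"
  unfolding l2inner_def by (subst suminf_finite[of "{q}"]) (auto simp: delta_def)

lemma l2inner_delta_delta: "l2inner (delta p a) (delta q b) = (if p = q then cinner a b else 0)"
  by (simp add: l2inner_delta_left) (simp add: delta_def)

lemma bc_add: "bounded_cop T \<Longrightarrow> T (x + y) = T x + T y"
  by (simp add: bounded_cop_def)
lemma bc_scaleC: "bounded_cop T \<Longrightarrow> T (scaleC c x) = scaleC c (T x)"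
  by (simp add: bounded_cop_def)
lemma bc_zero: "bounded_cop T \<Longrightarrow> T 0 = 0"
proof -
  assume "bounded_cop T"
  then have "T 0 = T 0 + T 0" using bc_add[of T 0 0] by simp
  then show "T 0 = 0" by simp
qed

lemma Cop_zero: "(\<forall>n. bounded_cop (A n)) \<Longrightarrow> Cop A a m 0 = 0"
  by (induction m) (auto simp: bc_zero)
lemma Cop_add: "(\<forall>n. bounded_cop (A n)) \<Longrightarrow> Cop A a m (x + y) = Cop A a m x + Cop A a m y"
  by (induction m) (auto simp: bc_add)
lemma Cop_comp: "Cop A (a + m1) m2 (Cop A a m1 x) = Cop A a (m1 + m2) x"
  by (induction m2) (auto simp: add.assoc)

lemma wshift_pow:
  assumes lin: "\<forall>n. bounded_cop (A n)"
  shows "(wshift A ^^ i) w q = (if i \<le> q then Cop A (q - i) i (w (q - i)) else 0)"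
proof (induction i arbitrary: q)
  case 0
  then show ?case by simp
next
  case (Suc i)
  show ?case
  proof (cases q)
    case 0
    then show ?thesis by (simp add: wshift_def)
  next
    case (Suc q')
    have "(wshift A ^^ Suc i) w q = A q' ((wshift A ^^ i) w q')"
      by (simp add: wshift_def Suc)
    also have "\<dots> = A q' (if i \<le> q' then Cop A (q' - i) i (w (q' - i)) else 0)"
      by (simp only: Suc.IH)
    also have "\<dots> = (if Suc i \<le> q then Cop A (q - Suc i) (Suc i) (w (q - Suc i)) else 0)"
      using lin by (auto simp: Suc bc_zero)
    finally show ?thesis .
  qed
qed

lemma wshift_l2:
  assumes lin: "\<forall>n. bounded_cop (A n)" and bnd: "\<forall>n x. norm (A n x) \<le> M * norm x"
    and a: "a \<in> l2seq"
  shows "wshift A a \<in> l2seq"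
proof -
  have sa: "summable (\<lambda>n. M^2 * (norm (a n))^2)" using a unfolding l2seq_def by (intro summable_mult) simp
  have nb: "norm ((norm (wshift A a (Suc n)))^2) \<le> M^2 * (norm (a n))^2" for n
  proof -
    have "norm (A n (a n)) \<le> M * norm (a n)" using bnd by blast
    then have "(norm (A n (a n)))^2 \<le> (M * norm (a n))^2" by (intro power_mono) auto
    moreover have "wshift A a (Suc n) = A n (a n)" by (simp add: wshift_def)
    ultimately show ?thesis by (simp add: power_mult_distrib)
  qed
  have "summable (\<lambda>n. (norm (wshift A a (Suc n)))^2)"
    by (rule summable_comparison_test'[OF sa nb])
  then have "summable (\<lambda>n. (norm (wshift A a n))^2)"
    by (rule summable_Suc_iff[THEN iffD1])
  then show ?thesis by (simp add: l2seq_def)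
qed

lemma wshift_pow_l2:
  assumes lin: "\<forall>n. bounded_cop (A n)" and bnd: "\<forall>n x. norm (A n x) \<le> M * norm x"
    and a: "a \<in> l2seq"
  shows "(wshift A ^^ i) a \<in> l2seq"
proof (induction i)
  case 0
  then show ?case using a by simp
next
  case (Suc i)
  then show ?case using wshift_l2[OF lin bnd] by simp
qed

lemma wshift_pow_delta:
  assumes lin: "\<forall>n. bounded_cop (A n)"
  shows "(wshift A ^^ i) (delta q v) = delta (q + i) (Cop A q i v)"
proof
  fix p
  have "(wshift A ^^ i) (delta q v) p = (if i \<le> p then Cop A (p - i) i (delta q v (p - i)) else 0)"
    by (rule wshift_pow[OF lin])
  also have "\<dots> = delta (q + i) (Cop A q i v) p"
    by (auto simp: delta_def Cop_zero[OF lin])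
  finally show "(wshift A ^^ i) (delta q v) p = delta (q + i) (Cop A q i v) p" .
qed

lemma wshift_pow_add:
  assumes lin: "\<forall>n. bounded_cop (A n)"
  shows "(wshift A ^^ i) (\<lambda>p. a p + b p) = (\<lambda>p. (wshift A ^^ i) a p + (wshift A ^^ i) b p)"
proof
  fix p
  show "(wshift A ^^ i) (\<lambda>p. a p + b p) p = (wshift A ^^ i) a p + (wshift A ^^ i) b p"
    by (simp only: wshift_pow[OF lin] Cop_add[OF lin]) simp
qed

lemma pos_selfadj:
  assumes b: "bounded_cop T" and p: "positive_op T"
  shows "cinner (T x) y = cinner x (T y)"
proof -
  have z: "cinner (T u) u = cinner u (T u)" for u
  proof -
    have "Im (cinner (T u) u) = 0" using p by (simp add: positive_op_def cpos_def)
    then have "cnj (cinner (T u) u) = cinner (T u) u"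
      by (simp add: complex_eq_iff)
    then show ?thesis using cinner_commute[of u "T u"] by simp
  qed
  have e1: "cinner (T x) y + cinner (T y) x = cinner x (T y) + cinner y (T x)"
  proof -
    have "cinner (T (x + y)) (x + y) = cinner (T x) x + cinner (T x) y + cinner (T y) x + cinner (T y) y"
      by (simp add: bc_add[OF b] cinner_add_left cinner_add_right)
    moreover have "cinner (x + y) (T (x + y)) = cinner x (T x) + cinner x (T y) + cinner y (T x) + cinner y (T y)"
      by (simp add: bc_add[OF b] cinner_add_left cinner_add_right)
    ultimately show ?thesis using z[of "x + y"] z[of x] z[of y] by simp
  qed
  have e2: "cinner (T x) (scaleC \<i> y) + cinner (T (scaleC \<i> y)) x
      = cinner x (T (scaleC \<i> y)) + cinner (scaleC \<i> y) (T x)"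
  proof -
    let ?y = "scaleC \<i> y"
    have "cinner (T (x + ?y)) (x + ?y) = cinner (T x) x + cinner (T x) ?y + cinner (T ?y) x + cinner (T ?y) ?y"
      by (simp only: bc_add[OF b] cinner_add_left cinner_add_right ac_simps)
    moreover have "cinner (x + ?y) (T (x + ?y)) = cinner x (T x) + cinner x (T ?y) + cinner ?y (T x) + cinner ?y (T ?y)"
      by (simp only: bc_add[OF b] cinner_add_left cinner_add_right ac_simps)
    ultimately show ?thesis using z[of "x + ?y"] z[of x] z[of ?y] by simp
  qed
  then have "\<i> * (cinner (T y) x - cinner (T x) y) = \<i> * (cinner y (T x) - cinner x (T y))"
    by (simp add: bc_scaleC[OF b] cinner_scaleC_left cinner_scaleC_right algebra_simps)
  then have "cinner (T y) x - cinner (T x) y = cinner y (T x) - cinner x (T y)"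
    by simp
  with e1 show ?thesis by (simp add: complex_eq_iff)
qed

lemma adj_exists:
  assumes lin: "\<forall>n. bounded_cop (A n)" and pos: "\<forall>n. positive_op (A n)"
    and bnd: "\<forall>n x. norm (A n x) \<le> M * norm x"
  shows "(\<forall>y\<in>l2seq. l2adjoint (wshift A) y \<in> l2seq) \<and>
       (\<forall>x\<in>l2seq. \<forall>y\<in>l2seq. l2inner (wshift A x) y = l2inner x (l2adjoint (wshift A) y))"
proof -
  define S0 where "S0 = (\<lambda>(y::nat \<Rightarrow> 'a) n. A n (y (Suc n)))"
  have S0l2: "S0 y \<in> l2seq" if y: "y \<in> l2seq" for y
  proof -
    have sy: "summable (\<lambda>n. M^2 * (norm (y (Suc n)))^2)"
      using y summable_Suc_iff[of "\<lambda>n. (norm (y n))^2"] unfolding l2seq_def by (intro summable_mult) simp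
    have nb: "norm ((norm (S0 y n))^2) \<le> M^2 * (norm (y (Suc n)))^2" for n
    proof -
      have "norm (A n (y (Suc n))) \<le> M * norm (y (Suc n))" using bnd by blast
      then have "(norm (A n (y (Suc n))))^2 \<le> (M * norm (y (Suc n)))^2" by (intro power_mono) auto
      then show ?thesis by (simp add: power_mult_distrib S0_def)
    qed
    show ?thesis unfolding l2seq_def using summable_comparison_test'[OF sy nb] by simp
  qed
  have adj: "l2inner (wshift A x) y = l2inner x (S0 y)" if x: "x \<in> l2seq" and y: "y \<in> l2seq" for x y
  proof -
    define f where "f = (\<lambda>n. cinner (wshift A x n) (y n))"
    have sf: "summable f" unfolding f_def by (rule summable_cinner[OF wshift_l2[OF lin bnd x] y])
    have f0: "f 0 = 0" by (simp add: f_def wshift_def)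
    have fS: "f (Suc n) = cinner (x n) (S0 y n)" for n
      using pos_selfadj[of "A n" "x n" "y (Suc n)"] lin pos by (simp add: f_def wshift_def S0_def)
    have "l2inner (wshift A x) y = suminf f" by (simp add: l2inner_def f_def)
    also have "\<dots> = (\<Sum>n. f (Suc n))" using suminf_split_head[OF sf] f0 by simp
    also have "\<dots> = l2inner x (S0 y)" by (simp add: fS l2inner_def)
    finally show ?thesis .
  qed
  have ex: "\<exists>S. (\<forall>y\<in>l2seq. S y \<in> l2seq) \<and>
       (\<forall>x\<in>l2seq. \<forall>y\<in>l2seq. l2inner (wshift A x) y = l2inner x (S y))"
    using S0l2 adj by blast
  show ?thesis unfolding l2adjoint_def by (rule someI_ex[OF ex])
qed

lemma adj_pow:
  assumes lin: "\<forall>n. bounded_cop (A n)" and pos: "\<forall>n. positive_op (A n)"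
    and bnd: "\<forall>n x. norm (A n x) \<le> M * norm x"
    and a: "a \<in> l2seq" and b: "b \<in> l2seq"
  shows "(l2adjoint (wshift A) ^^ j) a \<in> l2seq \<and>
    l2inner ((l2adjoint (wshift A) ^^ j) a) b = l2inner a ((wshift A ^^ j) b)"
  using b
proof (induction j arbitrary: b)
  case 0
  then show ?case using a by simp
next
  case (Suc j)
  let ?S = "l2adjoint (wshift A)"
  let ?T = "wshift A"
  note AE = adj_exists[OF lin pos bnd]
  have c: "(?S ^^ j) a \<in> l2seq" using Suc.IH[OF Suc.prems] by blast
  have Tb: "?T b \<in> l2seq" by (rule wshift_l2[OF lin bnd Suc.prems])
  have Sc: "?S ((?S ^^ j) a) \<in> l2seq" using AE c by blast
  have "l2inner ((?S ^^ Suc j) a) b = l2inner (?S ((?S ^^ j) a)) b" by simp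
  also have "\<dots> = cnj (l2inner b (?S ((?S ^^ j) a)))" by (rule l2inner_cnj[OF Sc Suc.prems])
  also have "\<dots> = cnj (l2inner (?T b) ((?S ^^ j) a))" using AE c Suc.prems by simp
  also have "\<dots> = l2inner ((?S ^^ j) a) (?T b)" by (rule l2inner_cnj[OF c Tb, symmetric])
  also have "\<dots> = l2inner a ((?T ^^ j) (?T b))" using Suc.IH[OF Tb] by blast
  also have "\<dots> = l2inner a ((?T ^^ Suc j) b)" by (simp add: funpow_swap1)
  finally show ?case using Sc by simp
qed

lemma Cop_surj:
  assumes surj: "\<forall>n w. \<exists>v. A n v = w"
  shows "\<exists>v. Cop A a m v = w"
proof (induction m arbitrary: w)
  case 0
  then show ?case by auto
next
  case (Suc m)
  obtain w' where w': "A (a + m) w' = w" using surj by blast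
  obtain v where "Cop A a m v = w'" using Suc.IH by blast
  then show ?case using w' by auto
qed

lemma Cop_comp0: "Cop A m1 m2 (Cop A 0 m1 x) = Cop A 0 (m1 + m2) x"
  using Cop_comp[of A 0 m1 m2 x] by simp

lemma sum_restrict2:
  fixes F :: "nat \<Rightarrow> nat \<Rightarrow> 'b::comm_monoid_add"
  assumes I: "I \<subseteq> {..k}" and z: "\<And>i j. i \<le> k \<Longrightarrow> j \<le> k \<Longrightarrow> i \<notin> I \<or> j \<notin> I \<Longrightarrow> F i j = 0"
  shows "(\<Sum>i\<le>k. \<Sum>j\<le>k. F i j) = (\<Sum>i\<in>I. \<Sum>j\<in>I. F i j)"
proof -
  have "(\<Sum>i\<le>k. \<Sum>j\<le>k. F i j) = (\<Sum>i\<le>k. \<Sum>j\<in>I. F i j)"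
  proof (rule sum.cong[OF refl])
    fix i assume "i \<in> {..k}"
    then show "(\<Sum>j\<le>k. F i j) = (\<Sum>j\<in>I. F i j)"
      using I z by (intro sum.mono_neutral_right) auto
  qed
  also have "\<dots> = (\<Sum>i\<in>I. \<Sum>j\<in>I. F i j)"
    using I z by (intro sum.mono_neutral_right) (auto intro!: sum.neutral)
  finally show ?thesis .
qed

lemma cpos_add: "cpos a \<Longrightarrow> cpos b \<Longrightarrow> cpos (a + b)"
  by (simp add: cpos_def)

lemma levelH:
  fixes A :: "nat \<Rightarrow> 'a::cinner_space \<Rightarrow> 'a"
  assumes lin: "\<forall>n. bounded_cop (A n)" and surj: "\<forall>n w. \<exists>v. A n v = w"
    and E: "\<forall>q u. cpos (\<Sum>i\<le>k. \<Sum>j\<le>k. cinner (Cop A q (i + j) (u j)) (Cop A q (i + j) (u i)))"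
    and zero: "\<forall>j. L + j < k \<longrightarrow> z j = 0"
  shows "cpos (\<Sum>i\<le>k. \<Sum>j\<le>k. cinner (Cop A (L + j - k) i (z j)) (Cop A (L + i - k) j (z i)))"
proof (cases "k \<le> L")
  case True
  define n where "n = L - k"
  have "\<forall>j. \<exists>v. Cop A n j v = z j" using Cop_surj[OF surj] by blast
  then obtain u where u: "\<And>j. Cop A n j (u j) = z j" unfolding choice_iff by blast
  have "(\<Sum>i\<le>k. \<Sum>j\<le>k. cinner (Cop A (L + j - k) i (z j)) (Cop A (L + i - k) j (z i)))
      = (\<Sum>i\<le>k. \<Sum>j\<le>k. cinner (Cop A n (i + j) (u j)) (Cop A n (i + j) (u i)))"
  proof (intro sum.cong refl)
    fix i j
    have 1: "L + j - k = n + j" "L + i - k = n + i" using True by (auto simp: n_def)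
    show "cinner (Cop A (L + j - k) i (z j)) (Cop A (L + i - k) j (z i))
        = cinner (Cop A n (i + j) (u j)) (Cop A n (i + j) (u i))"
      unfolding 1 u[symmetric] Cop_comp by (simp add: add.commute)
  qed
  then show ?thesis using E by simp
next
  case False
  define m where "m = k - L"
  define r where "r = m div 2"
  define s where "s = m mod 2"
  define d where "d = m - r"
  have mk: "m \<le> k" "1 \<le> m" using False by (auto simp: m_def)
  have md: "m = r + d" "d = r + s" unfolding r_def s_def d_def by presburger+
  have "\<forall>j. \<exists>v. Cop A 0 (j - m) v = z j" using Cop_surj[OF surj] by blast
  then obtain v where v: "\<And>j. Cop A 0 (j - m) (v j) = z j" unfolding choice_iff by blast
  define u where "u a = (if r \<le> a \<and> a + d \<le> k then Cop A 0 s (v (a + d)) else 0)" for a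
  define F where "F i j = cinner (Cop A (L + j - k) i (z j)) (Cop A (L + i - k) j (z i))" for i j
  define G where "G a b = cinner (Cop A s (a + b) (u b)) (Cop A s (a + b) (u a))" for a b
  have zm: "z j = 0" if "j < m" for j using zero that by (auto simp: m_def)
  have "(\<Sum>i\<le>k. \<Sum>j\<le>k. F i j) = (\<Sum>i\<in>{m..k}. \<Sum>j\<in>{m..k}. F i j)"
    by (rule sum_restrict2) (auto simp: F_def zm Cop_zero[OF lin])
  also have "\<dots> = (\<Sum>i\<in>{r + d..(k - d) + d}. \<Sum>j\<in>{r + d..(k - d) + d}. F i j)"
    using md mk by simp
  also have "\<dots> = (\<Sum>a\<in>{r..k - d}. \<Sum>b\<in>{r..k - d}. F (a + d) (b + d))"
    by (simp only: sum.shift_bounds_cl_nat_ivl)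
  also have "\<dots> = (\<Sum>a\<in>{r..k - d}. \<Sum>b\<in>{r..k - d}. G a b)"
  proof (intro sum.cong refl)
    fix a b assume a: "a \<in> {r..k - d}" and b: "b \<in> {r..k - d}"
    have ua: "u a = Cop A 0 s (v (a + d))" and ub: "u b = Cop A 0 s (v (b + d))"
      using a b mk md by (auto simp: u_def)
    have e1: "L + (b + d) - k = b - r" "L + (a + d) - k = a - r"
      using a b mk md False by (auto simp: m_def)
    have e2: "b - r + (a + d) = s + (a + b)" "a - r + (b + d) = s + (a + b)"
      using a b md by auto
    have "F (a + d) (b + d) = cinner (Cop A (b - r) (a + d) (Cop A 0 (b - r) (v (b + d))))
        (Cop A (a - r) (b + d) (Cop A 0 (a - r) (v (a + d))))"
      unfolding F_def e1 using v[of "b + d"] v[of "a + d"] md by simp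
    also have "\<dots> = cinner (Cop A 0 (s + (a + b)) (v (b + d))) (Cop A 0 (s + (a + b)) (v (a + d)))"
      by (simp only: Cop_comp0 e2)
    also have "\<dots> = G a b"
      by (simp only: G_def ua ub Cop_comp0)
    finally show "F (a + d) (b + d) = G a b" .
  qed
  also have "\<dots> = (\<Sum>a\<le>k. \<Sum>b\<le>k. G a b)"
    by (rule sum_restrict2[symmetric]) (auto simp: G_def u_def Cop_zero[OF lin])
  finally show ?thesis using E unfolding F_def G_def by simp
qed

definition Kf :: "(nat \<Rightarrow> 'a::cinner_space \<Rightarrow> 'a) \<Rightarrow> nat \<Rightarrow> (nat \<Rightarrow> nat \<Rightarrow> 'a) \<Rightarrow> complex" where
  "Kf A k x = (\<Sum>i\<le>k. \<Sum>j\<le>k. l2inner ((wshift A ^^ i) (x j)) ((wshift A ^^ j) (x i)))"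

definition Kb :: "(nat \<Rightarrow> 'a::cinner_space \<Rightarrow> 'a) \<Rightarrow> nat \<Rightarrow> (nat \<Rightarrow> nat \<Rightarrow> 'a) \<Rightarrow> (nat \<Rightarrow> nat \<Rightarrow> 'a) \<Rightarrow> complex" where
  "Kb A k x w = (\<Sum>i\<le>k. \<Sum>j\<le>k. l2inner ((wshift A ^^ i) (x j)) ((wshift A ^^ j) (w i)))"

definition Qt :: "nat \<Rightarrow> nat \<Rightarrow> (nat \<Rightarrow> nat \<Rightarrow> 'a::zero) \<Rightarrow> nat \<Rightarrow> nat \<Rightarrow> 'a" where
  "Qt k L x j = (\<lambda>p. if p + k < L + j then x j p else 0)"

definition Pt :: "nat \<Rightarrow> nat \<Rightarrow> (nat \<Rightarrow> nat \<Rightarrow> 'a::zero) \<Rightarrow> nat \<Rightarrow> nat \<Rightarrow> 'a" where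
  "Pt k L x j = (\<lambda>p. if p + k = L + j then x j p else 0)"

definition zz :: "nat \<Rightarrow> nat \<Rightarrow> (nat \<Rightarrow> nat \<Rightarrow> 'a::zero) \<Rightarrow> nat \<Rightarrow> 'a" where
  "zz k L x j = (if k \<le> L + j then x j (L + j - k) else 0)"

lemma Kf_cong: "(\<And>j. j \<le> k \<Longrightarrow> x j = x' j) \<Longrightarrow> Kf A k x = Kf A k x'"
  unfolding Kf_def by (intro sum.cong refl) auto

lemma Kf_add:
  assumes lin: "\<forall>n. bounded_cop (A n)" and bnd: "\<forall>n x. norm (A n x) \<le> M * norm x"
    and x: "\<forall>j\<le>k. x j \<in> l2seq" and w: "\<forall>j\<le>k. w j \<in> l2seq"
  shows "Kf A k (\<lambda>j p. x j p + w j p) = Kf A k x + Kf A k w + Kb A k x w + Kb A k w x"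
proof -
  have "l2inner ((wshift A ^^ i) (\<lambda>p. x j p + w j p)) ((wshift A ^^ j) (\<lambda>p. x i p + w i p))
     = l2inner ((wshift A ^^ i) (x j)) ((wshift A ^^ j) (x i))
     + l2inner ((wshift A ^^ i) (w j)) ((wshift A ^^ j) (w i))
     + l2inner ((wshift A ^^ i) (x j)) ((wshift A ^^ j) (w i))
     + l2inner ((wshift A ^^ i) (w j)) ((wshift A ^^ j) (x i))"
    if ij: "i \<le> k" "j \<le> k" for i j
  proof -
    have m: "(wshift A ^^ i) (x j) \<in> l2seq" "(wshift A ^^ i) (w j) \<in> l2seq"
      "(wshift A ^^ j) (x i) \<in> l2seq" "(wshift A ^^ j) (w i) \<in> l2seq"
      using x w ij by (simp_all add: wshift_pow_l2[OF lin bnd])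
    show ?thesis
      unfolding wshift_pow_add[OF lin]
      using m l2_add[OF m(1) m(2)] l2_add[OF m(3) m(4)]
      by (simp add: l2inner_add_left l2inner_add_right algebra_simps)
  qed
  then show ?thesis unfolding Kf_def Kb_def
    by (simp add: sum.distrib)
qed

lemma Qt_Suc: fixes x :: "nat \<Rightarrow> nat \<Rightarrow> 'a::monoid_add"
  shows "Qt k (Suc L) x = (\<lambda>j p. Qt k L x j p + Pt k L x j p)"
  by (auto simp: Qt_def Pt_def fun_eq_iff)

lemma Pt_delta: "Pt k L x j = delta (L + j - k) (zz k L x j)"
  by (auto simp: Pt_def delta_def zz_def fun_eq_iff)

lemma Qt_l2: "x j \<in> l2seq \<Longrightarrow> Qt k L x j \<in> l2seq"
  by (rule l2_le[of "x j"]) (auto simp: Qt_def)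

lemma Tq0:
  assumes lin: "\<forall>n. bounded_cop (A n)" and "k \<le> L + i"
  shows "(wshift A ^^ i) (Qt k L x j) (L + i + j - k) = 0"
  unfolding wshift_pow[OF lin] using assms by (auto simp: Qt_def Cop_zero[OF lin])

lemma zz0: "\<not> k \<le> L + j \<Longrightarrow> zz k L x j = 0"
  by (simp add: zz_def)

lemma Kb_QP: assumes lin: "\<forall>n. bounded_cop (A n)"
  shows "Kb A k (Qt k L x) (Pt k L x) = 0"
  unfolding Kb_def
proof (intro sum.neutral ballI)
  fix i j
  show "l2inner ((wshift A ^^ j) (Qt k L x i)) ((wshift A ^^ i) (Pt k L x j)) = 0"
    unfolding Pt_delta wshift_pow_delta[OF lin] l2inner_delta_right
    by (cases "k \<le> L + j") (simp_all add: Tq0[OF lin] zz0 Cop_zero[OF lin])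
qed

lemma Kb_PQ: assumes lin: "\<forall>n. bounded_cop (A n)"
  shows "Kb A k (Pt k L x) (Qt k L x) = 0"
  unfolding Kb_def
proof (intro sum.neutral ballI)
  fix i j
  show "l2inner ((wshift A ^^ j) (Pt k L x i)) ((wshift A ^^ i) (Qt k L x j)) = 0"
    unfolding Pt_delta wshift_pow_delta[OF lin] l2inner_delta_left
    by (cases "k \<le> L + i") (simp_all add: Tq0[OF lin] zz0 Cop_zero[OF lin])
qed

lemma Kf_P: assumes lin: "\<forall>n. bounded_cop (A n)"
  shows "Kf A k (Pt k L x) =
    (\<Sum>i\<le>k. \<Sum>j\<le>k. cinner (Cop A (L + j - k) i (zz k L x j)) (Cop A (L + i - k) j (zz k L x i)))"
  unfolding Kf_def
proof (intro sum.cong refl)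
  fix i j
  show "l2inner ((wshift A ^^ i) (Pt k L x j)) ((wshift A ^^ j) (Pt k L x i))
     = cinner (Cop A (L + j - k) i (zz k L x j)) (Cop A (L + i - k) j (zz k L x i))"
    unfolding Pt_delta wshift_pow_delta[OF lin] l2inner_delta_delta
    by (cases "k \<le> L + j"; cases "k \<le> L + i") (auto simp: zz0 Cop_zero[OF lin])
qed

lemma wshift_pow_zero:
  assumes lin: "\<forall>n. bounded_cop (A n)"
  shows "(wshift A ^^ i) (\<lambda>p. 0) = (\<lambda>p. 0)"
  by (rule ext) (simp add: wshift_pow[OF lin] Cop_zero[OF lin])

lemma Kf_Q_pos:
  fixes A :: "nat \<Rightarrow> 'a::cinner_space \<Rightarrow> 'a"
  assumes lin: "\<forall>n. bounded_cop (A n)" and bnd: "\<forall>n x. norm (A n x) \<le> M * norm x"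
    and surj: "\<forall>n w. \<exists>v. A n v = w"
    and E: "\<forall>q u. cpos (\<Sum>i\<le>k. \<Sum>j\<le>k. cinner (Cop A q (i + j) (u j)) (Cop A q (i + j) (u i)))"
  shows "\<forall>x. (\<forall>j\<le>k. x j \<in> l2seq) \<longrightarrow> cpos (Kf A k (Qt k L x))"
proof (induction L)
  case 0
  show ?case
  proof (intro allI impI)
    fix x :: "nat \<Rightarrow> nat \<Rightarrow> 'a"
    have "Kf A k (Qt k 0 x) = Kf A k (\<lambda>j p. 0)"
      by (rule Kf_cong) (auto simp: Qt_def fun_eq_iff)
    also have "\<dots> = 0" by (simp add: Kf_def wshift_pow_zero[OF lin])
    finally show "cpos (Kf A k (Qt k 0 x))" by (simp add: cpos_def)
  qed
next
  case (Suc L)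
  show ?case
  proof (intro allI impI)
    fix x :: "nat \<Rightarrow> nat \<Rightarrow> 'a"
    assume x: "\<forall>j\<le>k. x j \<in> l2seq"
    have q: "\<forall>j\<le>k. Qt k L x j \<in> l2seq" using x by (simp add: Qt_l2)
    have p: "\<forall>j\<le>k. Pt k L x j \<in> l2seq" by (simp add: Pt_delta)
    have "Kf A k (Qt k (Suc L) x) = Kf A k (Qt k L x) + Kf A k (Pt k L x)"
      unfolding Qt_Suc Kf_add[OF lin bnd q p] Kb_QP[OF lin] Kb_PQ[OF lin] by simp
    moreover have "cpos (Kf A k (Qt k L x))" using Suc.IH x by blast
    moreover have "cpos (Kf A k (Pt k L x))"
      unfolding Kf_P[OF lin]
      by (rule levelH[OF lin surj E]) (simp add: zz0)
    ultimately show "cpos (Kf A k (Qt k (Suc L) x))" by (simp add: cpos_add)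
  qed
qed

lemma Kf_finite:
  assumes "\<forall>j\<le>k. \<forall>p\<ge>N. x j p = 0"
  shows "Kf A k (Qt k (N + k) x) = Kf A k x"
  by (rule Kf_cong) (use assms in \<open>auto simp: Qt_def fun_eq_iff\<close>)

lemma T_tr:
  assumes lin: "\<forall>n. bounded_cop (A n)"
  shows "(wshift A ^^ i) (\<lambda>p. if p < N then w p else 0) = (\<lambda>q. if q < N + i then (wshift A ^^ i) w q else 0)"
  by (rule ext) (auto simp: wshift_pow[OF lin] Cop_zero[OF lin])

lemma l2inner_tr:
  "l2inner (\<lambda>q. if q < M then a q else 0) (\<lambda>q. if q < M' then b q else 0) = (\<Sum>q<min M M'. cinner (a q) (b q))"
  unfolding l2inner_def by (subst suminf_finite[of "{..<min M M'}"]) auto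

lemma cpos_lim:
  assumes "\<forall>N. cpos (f N)" and "f \<longlonglongrightarrow> l"
  shows "cpos l"
proof -
  have r: "(\<lambda>N. Re (f N)) \<longlonglongrightarrow> Re l" and i: "(\<lambda>N. Im (f N)) \<longlonglongrightarrow> Im l"
    using assms(2) by (auto intro: tendsto_Re tendsto_Im)
  have "0 \<le> Re l" by (rule LIMSEQ_le_const[OF r]) (use assms(1) in \<open>auto simp: cpos_def\<close>)
  moreover have "0 \<le> Im l" by (rule LIMSEQ_le_const[OF i]) (use assms(1) in \<open>auto simp: cpos_def\<close>)
  moreover have "Im l \<le> 0" by (rule LIMSEQ_le_const2[OF i]) (use assms(1) in \<open>auto simp: cpos_def\<close>)
  ultimately show ?thesis by (simp add: cpos_def)
qed

lemma Kf_tr_lim: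
  assumes lin: "\<forall>n. bounded_cop (A n)" and bnd: "\<forall>n x. norm (A n x) \<le> M * norm x"
    and x: "\<forall>j\<le>k. x j \<in> l2seq"
  shows "(\<lambda>N. Kf A k (\<lambda>j p. if p < N then x j p else 0)) \<longlonglongrightarrow> Kf A k x"
proof -
  have e: "Kf A k (\<lambda>j p. if p < N then x j p else 0) =
    (\<Sum>i\<le>k. \<Sum>j\<le>k. \<Sum>q<N + min i j. cinner ((wshift A ^^ i) (x j) q) ((wshift A ^^ j) (x i) q))" for N
  proof -
    have mm: "\<And>i j. min (N + i) (N + j) = N + min i j" by (simp add: min_def)
    show ?thesis unfolding Kf_def T_tr[OF lin] l2inner_tr mm ..
  qed
  have l: "(\<lambda>N. \<Sum>q<N + min i j. cinner ((wshift A ^^ i) (x j) q) ((wshift A ^^ j) (x i) q))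
      \<longlonglongrightarrow> l2inner ((wshift A ^^ i) (x j)) ((wshift A ^^ j) (x i))" if ij: "i \<le> k" "j \<le> k" for i j
  proof -
    have s: "summable (\<lambda>q. cinner ((wshift A ^^ i) (x j) q) ((wshift A ^^ j) (x i) q))"
      using x ij by (intro summable_cinner) (simp_all add: wshift_pow_l2[OF lin bnd])
    show ?thesis unfolding l2inner_def
      using LIMSEQ_ignore_initial_segment[OF summable_LIMSEQ[OF s], of "min i j"] by simp
  qed
  have "(\<lambda>N. \<Sum>i\<le>k. \<Sum>j\<le>k. \<Sum>q<N + min i j. cinner ((wshift A ^^ i) (x j) q) ((wshift A ^^ j) (x i) q))
     \<longlonglongrightarrow> Kf A k x"
    unfolding Kf_def by (intro tendsto_sum) (use l in auto)
  then show ?thesis by (simp only: e)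
qed

theorem mainTheorem1:
  fixes A :: "nat \<Rightarrow> 'h::chilbert_space \<Rightarrow> 'h" and k :: nat
  assumes separable: "\<exists>D::'h set. countable D \<and> closure D = UNIV"
    and bounded: "\<forall>n. bounded_cop (A n)"
    and positive: "\<forall>n. positive_op (A n)"
    and invertible: "\<forall>n. invertible_op (A n)"
    and unif_bounded: "\<exists>M. \<forall>n. onorm (A n) \<le> M"
    and k: "k \<ge> 1"
  shows "k_hyponormal k (wshift A) \<longleftrightarrow> embry_k_hyponormal k (wshift A)"
proof -
  note lin = bounded
  have surj: "\<forall>n w. \<exists>v. A n v = w"
  proof (intro allI)
    fix n w
    obtain S where "\<forall>x. A n (S x) = x" using invertible unfolding invertible_op_def by blast
    then show "\<exists>v. A n v = w" by blast
  qed
  obtain M where M: "\<forall>n. onorm (A n) \<le> M" using unif_bounded by blast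
  have bnd: "\<forall>n x. norm (A n x) \<le> M * norm x"
  proof (intro allI)
    fix n x
    obtain K where K: "\<forall>x. norm (A n x) \<le> norm x * K"
      using lin unfolding bounded_cop_def by blast
    have bl: "bounded_linear (A n)"
    proof (rule bounded_linear_intro)
      show "A n (x + y) = A n x + A n y" for x y using lin by (simp add: bc_add)
      show "A n (scaleR r x) = scaleR r (A n x)" for r x
        using lin by (simp add: scaleR_scaleC bc_scaleC)
      show "norm (A n x) \<le> norm x * K" for x using K by blast
    qed
    have "norm (A n x) \<le> onorm (A n) * norm x" by (rule onorm[OF bl])
    also have "\<dots> \<le> M * norm x" using M by (intro mult_right_mono) auto
    finally show "norm (A n x) \<le> M * norm x" .
  qed
  let ?T = "wshift A"
  let ?S = "l2adjoint (wshift A)"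
  define Ef where "Ef y = (\<Sum>i\<le>k. \<Sum>j\<le>k. l2inner ((?T ^^ (i + j)) (y j)) ((?T ^^ (i + j)) (y i)))" for y
  have KH: "k_hyponormal k ?T \<longleftrightarrow> (\<forall>x. (\<forall>i\<le>k. x i \<in> l2seq) \<longrightarrow> cpos (Kf A k x))"
  proof -
    have "(\<Sum>i\<le>k. \<Sum>j\<le>k. l2inner (((?S ^^ j) \<circ> (?T ^^ i)) (x j)) (x i)) = Kf A k x"
      if x: "\<forall>i\<le>k. x i \<in> l2seq" for x
      unfolding Kf_def
    proof (intro sum.cong refl)
      fix i j assume i: "i \<in> {..k}" and j: "j \<in> {..k}"
      have a: "(?T ^^ i) (x j) \<in> l2seq" using x j by (simp add: wshift_pow_l2[OF lin bnd])
      have b: "x i \<in> l2seq" using x i by simp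
      show "l2inner (((?S ^^ j) \<circ> (?T ^^ i)) (x j)) (x i) = l2inner ((?T ^^ i) (x j)) ((?T ^^ j) (x i))"
        using adj_pow[OF lin positive bnd a b, of j] by simp
    qed
    then show ?thesis unfolding k_hyponormal_def op_matrix_pos_def by auto
  qed
  have EH: "embry_k_hyponormal k ?T \<longleftrightarrow> (\<forall>x. (\<forall>i\<le>k. x i \<in> l2seq) \<longrightarrow> cpos (Ef x))"
  proof -
    have "(\<Sum>i\<le>k. \<Sum>j\<le>k. l2inner (((?S ^^ (i + j)) \<circ> (?T ^^ (i + j))) (x j)) (x i)) = Ef x"
      if x: "\<forall>i\<le>k. x i \<in> l2seq" for x
      unfolding Ef_def
    proof (intro sum.cong refl)
      fix i j assume i: "i \<in> {..k}" and j: "j \<in> {..k}"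
      have a: "(?T ^^ (i + j)) (x j) \<in> l2seq" using x j by (simp add: wshift_pow_l2[OF lin bnd])
      have b: "x i \<in> l2seq" using x i by simp
      show "l2inner (((?S ^^ (i + j)) \<circ> (?T ^^ (i + j))) (x j)) (x i)
          = l2inner ((?T ^^ (i + j)) (x j)) ((?T ^^ (i + j)) (x i))"
        using adj_pow[OF lin positive bnd a b, of "i + j"] by simp
    qed
    then show ?thesis unfolding embry_k_hyponormal_def op_matrix_pos_def by auto
  qed
  show ?thesis
  proof
    assume "k_hyponormal k ?T"
    then have K: "\<forall>x. (\<forall>i\<le>k. x i \<in> l2seq) \<longrightarrow> cpos (Kf A k x)" using KH by blast
    have "cpos (Ef y)" if y: "\<forall>i\<le>k. y i \<in> l2seq" for y
    proof -
      define x where "x j = (?T ^^ j) (y j)" for j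
      have xl: "\<forall>i\<le>k. x i \<in> l2seq" using y by (simp add: x_def wshift_pow_l2[OF lin bnd])
      have "Kf A k x = Ef y"
        unfolding Kf_def Ef_def x_def
      proof (intro sum.cong refl)
        fix i j
        show "l2inner ((?T ^^ i) ((?T ^^ j) (y j))) ((?T ^^ j) ((?T ^^ i) (y i)))
            = l2inner ((?T ^^ (i + j)) (y j)) ((?T ^^ (i + j)) (y i))"
        proof -
          have c1: "(?T ^^ i) ((?T ^^ j) v) = (?T ^^ (i + j)) v" for v by (simp add: funpow_add)
          have c2: "(?T ^^ j) ((?T ^^ i) v) = (?T ^^ (i + j)) v" for v
            by (subst add.commute) (simp add: funpow_add)
          show ?thesis by (simp only: c1 c2)
        qed
      qed
      then show ?thesis using K xl by metis
    qed
    then show "embry_k_hyponormal k ?T" using EH by blast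
  next
    assume "embry_k_hyponormal k ?T"
    then have Ep: "\<forall>x. (\<forall>i\<le>k. x i \<in> l2seq) \<longrightarrow> cpos (Ef x)" using EH by blast
    have E: "\<forall>q u. cpos (\<Sum>i\<le>k. \<Sum>j\<le>k. cinner (Cop A q (i + j) (u j)) (Cop A q (i + j) (u i)))"
    proof (intro allI)
      fix q :: nat and u :: "nat \<Rightarrow> 'h"
      define y where "y j = delta q (u j)" for j
      have yl: "\<forall>i\<le>k. y i \<in> l2seq" by (simp add: y_def)
      have "Ef y = (\<Sum>i\<le>k. \<Sum>j\<le>k. cinner (Cop A q (i + j) (u j)) (Cop A q (i + j) (u i)))"
        unfolding Ef_def y_def wshift_pow_delta[OF lin] l2inner_delta_delta by simp
      then show "cpos (\<Sum>i\<le>k. \<Sum>j\<le>k. cinner (Cop A q (i + j) (u j)) (Cop A q (i + j) (u i)))"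
        using Ep yl by metis
    qed
    have "cpos (Kf A k x)" if x: "\<forall>i\<le>k. x i \<in> l2seq" for x
    proof (rule cpos_lim)
      show "(\<lambda>N. Kf A k (\<lambda>j p. if p < N then x j p else 0)) \<longlonglongrightarrow> Kf A k x"
        by (rule Kf_tr_lim[OF lin bnd x])
      show "\<forall>N. cpos (Kf A k (\<lambda>j p. if p < N then x j p else 0))"
      proof
        fix N
        let ?x = "\<lambda>j p. if p < N then x j p else 0"
        have xl: "\<forall>j\<le>k. ?x j \<in> l2seq"
          using x by (auto intro: l2_le[of "x j" "?x j" for j])
        have "Kf A k (Qt k (N + k) ?x) = Kf A k ?x" by (rule Kf_finite) auto
        moreover have "cpos (Kf A k (Qt k (N + k) ?x))"
        proof -
          have "\<forall>x. (\<forall>j\<le>k. x j \<in> l2seq) \<longrightarrow> cpos (Kf A k (Qt k (N + k) x))"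
            by (rule Kf_Q_pos[OF lin bnd surj E])
          then have "(\<forall>j\<le>k. ?x j \<in> l2seq) \<longrightarrow> cpos (Kf A k (Qt k (N + k) ?x))"
            by (rule spec)
          then show ?thesis using xl by blast
        qed
        ultimately show "cpos (Kf A k ?x)" by simp
      qed
    qed
    then show "k_hyponormal k ?T" using KH by blast
  qed
qed

end
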